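(* Let $m$ be odd, let $f:\mathbb{Z}_m\to\{\pm1,\pm\mathrm{i}\}$ be a quaternary sequence, and let $\phi(0,k)=\mathrm{Re}f(k)-\mathrm{Im}f(k)$, $\phi(1,k)=\mathrm{Re}f(k)+\mathrm{Im}f(k)$ for $k\in\mathbb{Z}_m$. Put \[ B=\{j\in\mathbb{Z}_m:\phi(0,j)=-1\},\qquad D=\{j\in\mathbb{Z}_m:\phi(1,j)=-1\}. \] Then $f$ is an OQS if and only if $B$ and $D$ are $2$-$\{m;|B|,|D|;|B|+|D|-\frac{m+1}{2}\}$ ASDS and the multiset $B-D$ is symmetric.
   Context: $\mathrm{i}=\sqrt{-1}$. A quaternary sequence $f:\mathbb{Z}_m\to\{\pm1,\pm\mathrm{i}\}$ of odd length $m$ is an OQS if $|R_f(w)|=1$ for all $1\le w\le m-1$, where $R_f(w)=\sum_{k\in\mathbb{Z}_m}f(k)\overline{f(k+w)}$. For $B,D\subseteq\mathbb{Z}_m$ and $a\in\mathbb{Z}_m\setminus\{0\}$, let $N_{B,D}(a)=|\{(x,x')\in B\times B: x-x'\equiv a\}|+|\{(y,y')\in D\times D: y-y'\equiv a\}|$. For an integer $\mu$, $B$ and $D$ are $2$-$\{m;k,r;\mu\}$ ASDS if $|B|=k$, $|D|=r$ and $N_{B,D}(a)\in\{\mu,\mu+1\}$ for every $a\in\mathbb{Z}_m\setminus\{0\}$. The multiset $B-D$ of differences $x-y \bmod m$, $(x,y)\in B\times D$, is symmetric (closed under negation) if for every $w\in\mathbb{Z}_m$, $|\{(x,y)\in B\times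 D: x-y\equiv w\}|=|\{(x,y)\in B\times D: x-y\equiv -w\}|$. *)

theory Defs
  imports Complex_Main
begin

text \<open>Z_m is modelled as {0..<m} (nat) with arithmetic mod m.\<close>

definition zdiff :: "nat \<Rightarrow> nat \<Rightarrow> nat \<Rightarrow> nat" where
  "zdiff m x y = (x + m - y) mod m"

definition quaternary :: "nat \<Rightarrow> (nat \<Rightarrow> complex) \<Rightarrow> bool" where
  "quaternary m f \<longleftrightarrow> (\<forall>k<m. f k \<in> {1, -1, \<i>, -\<i>})"

definition autocorr :: "nat \<Rightarrow> (nat \<Rightarrow> complex) \<Rightarrow> nat \<Rightarrow> complex" where
  "autocorr m f w = (\<Sum>k<m. f k * cnj (f ((k + w) mod m)))"

definition OQS :: "nat \<Rightarrow> (nat \<Rightarrow> complex) \<Rightarrow> bool" where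
  "OQS m f \<longleftrightarrow> odd m \<and> quaternary m f \<and> (\<forall>w\<in>{1..m-1}. cmod (autocorr m f w) = 1)"

definition Ncount :: "nat \<Rightarrow> nat set \<Rightarrow> nat set \<Rightarrow> nat \<Rightarrow> nat" where
  "Ncount m B D a = card {(x, x'). x \<in> B \<and> x' \<in> B \<and> zdiff m x x' = a}
                  + card {(y, y'). y \<in> D \<and> y' \<in> D \<and> zdiff m y y' = a}"

definition ASDS2 :: "nat \<Rightarrow> nat \<Rightarrow> nat \<Rightarrow> int \<Rightarrow> nat set \<Rightarrow> nat set \<Rightarrow> bool" where
  "ASDS2 m k r \<mu> B D \<longleftrightarrow> B \<subseteq> {0..<m} \<and> D \<subseteq> {0..<m} \<and> card B = k \<and> card D = r \<and>
     (\<forall>a\<in>{1..<m}. int (Ncount m B D a) \<in> {\<mu>, \<mu> + 1})"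

definition diff_symmetric :: "nat \<Rightarrow> nat set \<Rightarrow> nat set \<Rightarrow> bool" where
  "diff_symmetric m B D \<longleftrightarrow> (\<forall>w<m.
     card {(x, y). x \<in> B \<and> y \<in> D \<and> zdiff m x y = w}
   = card {(x, y). x \<in> B \<and> y \<in> D \<and> zdiff m x y = (m - w) mod m})"

end

theory Submission imports Defs begin
lemma mod2: assumes "(a::nat) < 2*m" shows "a mod m = (if a < m then a else a - m)"
proof (cases "a < m")
  case False
  then have "a mod m = (a - m) mod m" by (simp add: le_mod_geq)
  also have "\<dots> = a - m" using False assms by (intro mod_less) linarith
  finally show ?thesis using False by simp
qed simp
lemma zkey: "x < m \<Longrightarrow> y < m \<Longrightarrow> w < m \<Longrightarrow> zdiff m x y = w \<longleftrightarrow> x = (y + w) mod m"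
  unfolding zdiff_def by (subst mod2, simp, subst mod2, simp, auto)
lemma zkey2: "x < m \<Longrightarrow> y < m \<Longrightarrow> w < m \<Longrightarrow> zdiff m x y = (m - w) mod m \<longleftrightarrow> y = (x + w) mod m"
  unfolding zdiff_def by (subst mod2, simp, subst mod2, simp, subst mod2, simp, auto)
lemma shift_inj: "0 < (m::nat) \<Longrightarrow> w < m \<Longrightarrow> inj_on (\<lambda>k. (k + w) mod m) {..<m}"
  unfolding inj_on_def by (auto simp: mod2 split: if_splits)

lemma shift_bij: assumes "0 < (m::nat)" "w < m" shows "bij_betw (\<lambda>k. (k + w) mod m) {..<m} {..<m}"
proof -
  have "(\<lambda>k. (k + w) mod m) ` {..<m} \<subseteq> {..<m}" using assms by auto
  moreover have "card ((\<lambda>k. (k + w) mod m) ` {..<m}) = card {..<m}"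
    using card_image[OF shift_inj[OF assms]] by simp
  ultimately have "(\<lambda>k. (k + w) mod m) ` {..<m} = {..<m}"
    by (metis card_subset_eq finite_lessThan)
  then show ?thesis using shift_inj[OF assms] unfolding bij_betw_def by simp
qed

lemma sum_shift: assumes "0 < (m::nat)" "w < m"
  shows "(\<Sum>k<m. g ((k + w) mod m)) = (\<Sum>k<m. g k)"
  using sum.reindex_bij_betw[OF shift_bij[OF assms], of g] by simp

lemma card_pairs1: assumes "X \<subseteq> {..<m}" "Y \<subseteq> {..<m}" "w < m"
  shows "card {(x, y). x \<in> X \<and> y \<in> Y \<and> zdiff m x y = w}
       = card ({..<m} \<inter> {k. k \<in> Y \<and> (k + w) mod m \<in> X})"
proof -
  have "{(x, y). x \<in> X \<and> y \<in> Y \<and> zdiff m x y = w}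
      = (\<lambda>k. ((k + w) mod m, k)) ` ({..<m} \<inter> {k. k \<in> Y \<and> (k + w) mod m \<in> X})"
  proof -
    have zk: "\<And>x y. x \<in> X \<Longrightarrow> y \<in> Y \<Longrightarrow> zdiff m x y = w \<longleftrightarrow> x = (y + w) mod m"
      using assms zkey by blast
    show ?thesis
    proof (rule set_eqI, rule iffI)
      fix p assume "p \<in> {(x, y). x \<in> X \<and> y \<in> Y \<and> zdiff m x y = w}"
      then obtain x y where "p = (x,y)" "x \<in> X" "y \<in> Y" "zdiff m x y = w" by blast
      then show "p \<in> (\<lambda>k. ((k + w) mod m, k)) ` ({..<m} \<inter> {k. k \<in> Y \<and> (k + w) mod m \<in> X})"
        using zk assms(2) by (auto simp: image_iff)
    next
      fix p assume "p \<in> (\<lambda>k. ((k + w) mod m, k)) ` ({..<m} \<inter> {k. k \<in> Y \<and> (k + w) mod m \<in> X})"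
      then obtain k where "p = ((k + w) mod m, k)" "k \<in> Y" "(k + w) mod m \<in> X" by blast
      then show "p \<in> {(x, y). x \<in> X \<and> y \<in> Y \<and> zdiff m x y = w}" using zk by auto
    qed
  qed
  moreover have "inj_on (\<lambda>k. ((k + w) mod m, k)) A" for A by (auto simp: inj_on_def)
  ultimately show ?thesis by (simp add: card_image)
qed

lemma card_pairs2: assumes "X \<subseteq> {..<m}" "Y \<subseteq> {..<m}" "w < m"
  shows "card {(x, y). x \<in> X \<and> y \<in> Y \<and> zdiff m x y = (m - w) mod m}
       = card ({..<m} \<inter> {k. k \<in> X \<and> (k + w) mod m \<in> Y})"
proof -
  have "{(x, y). x \<in> X \<and> y \<in> Y \<and> zdiff m x y = (m - w) mod m}
      = (\<lambda>k. (k, (k + w) mod m)) ` ({..<m} \<inter> {k. k \<in> X \<and> (k + w) mod m \<in> Y})"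
  proof -
    have zk: "\<And>x y. x \<in> X \<Longrightarrow> y \<in> Y \<Longrightarrow> zdiff m x y = (m - w) mod m \<longleftrightarrow> y = (x + w) mod m"
      using assms zkey2 by blast
    show ?thesis
    proof (rule set_eqI, rule iffI)
      fix p assume "p \<in> {(x, y). x \<in> X \<and> y \<in> Y \<and> zdiff m x y = (m - w) mod m}"
      then obtain x y where "p = (x,y)" "x \<in> X" "y \<in> Y" "zdiff m x y = (m - w) mod m" by blast
      then show "p \<in> (\<lambda>k. (k, (k + w) mod m)) ` ({..<m} \<inter> {k. k \<in> X \<and> (k + w) mod m \<in> Y})"
        using zk assms(1) by (auto simp: image_iff)
    next
      fix p assume "p \<in> (\<lambda>k. (k, (k + w) mod m)) ` ({..<m} \<inter> {k. k \<in> X \<and> (k + w) mod m \<in> Y})"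
      then obtain k where "p = (k, (k + w) mod m)" "k \<in> X" "(k + w) mod m \<in> Y" by blast
      then show "p \<in> {(x, y). x \<in> X \<and> y \<in> Y \<and> zdiff m x y = (m - w) mod m}" using zk by auto
    qed
  qed
  moreover have "inj_on (\<lambda>k. (k, (k + w) mod m)) A" for A by (auto simp: inj_on_def)
  ultimately show ?thesis by (simp add: card_image)
qed

lemma corr_sum: assumes "0 < (m::nat)" "w < m" "X \<subseteq> {..<m}" "Y \<subseteq> {..<m}"
  shows "(\<Sum>k<m. (1 - 2 * of_bool (k \<in> X)) * (1 - 2 * of_bool ((k + w) mod m \<in> Y)) :: int)
    = int m - 2 * int (card X) - 2 * int (card Y) + 4 * int (card ({..<m} \<inter> {k. k \<in> X \<and> (k + w) mod m \<in> Y}))"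
proof -
  have pt: "(1 - 2 * of_bool (k \<in> X)) * (1 - 2 * of_bool ((k + w) mod m \<in> Y)) =
     (1::int) - 2 * of_bool (k \<in> X) - 2 * of_bool ((k + w) mod m \<in> Y) + 4 * of_bool (k \<in> X \<and> (k + w) mod m \<in> Y)" for k
    by auto
  have s1: "(\<Sum>k<m. of_bool (k \<in> X) :: int) = int (card X)"
    using assms(3) by (simp add: Int_absorb1 Int_absorb2 Int_commute[of "{..<m}"] Collect_mem_eq)
  have s2: "(\<Sum>k<m. of_bool ((k + w) mod m \<in> Y) :: int) = int (card Y)"
    using sum_shift[OF assms(1,2), of "\<lambda>k. of_bool (k \<in> Y) :: int"] assms(4)
    by (simp add: Int_absorb1 Int_absorb2 Int_commute[of "{..<m}"] Collect_mem_eq)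
  show ?thesis unfolding pt
    by (simp add: sum.distrib sum_subtractf sum_distrib_left[symmetric] s1 s2)
qed

lemma sq: "odd (r::int) \<Longrightarrow> (r^2 + i^2 = 1) \<longleftrightarrow> (r = 1 \<or> r = -1) \<and> i = 0"
  by (smt (verit, ccfv_SIG) even_zero power2_eq_1_iff sum_power2_eq_zero_iff zero_le_power_eq_numeral)

lemma reim:
  assumes "quaternary m f"
    and "B = {j \<in> {0..<m}. Re (f j) - Im (f j) = -1}"
    and "D = {j \<in> {0..<m}. Re (f j) + Im (f j) = -1}"
    and "k < m"
  shows "Re (f k) = real_of_int ((1 - 2 * of_bool (k \<in> B)) + (1 - 2 * of_bool (k \<in> D))) / 2
       \<and> Im (f k) = real_of_int ((1 - 2 * of_bool (k \<in> D)) - (1 - 2 * of_bool (k \<in> B))) / 2"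
proof -
  have "f k \<in> {1, -1, \<i>, -\<i>}" using assms(1,4) unfolding quaternary_def by blast
  then have "f k = 1 \<or> f k = -1 \<or> f k = \<i> \<or> f k = -\<i>" by simp
  moreover have mB: "k \<in> B \<longleftrightarrow> Re (f k) - Im (f k) = -1" using assms(2,4) by simp
  moreover have mD: "k \<in> D \<longleftrightarrow> Re (f k) + Im (f k) = -1" using assms(3,4) by simp
  ultimately show ?thesis by (elim disjE) simp_all
qed

lemma fin: "m = 2*t+1 \<Longrightarrow> ((int m - 2*b - 2*d + 2*int n = 1 \<or> int m - 2*b - 2*d + 2*int n = -1) \<and> 2*(int c1 - int c2) = 0)
   \<longleftrightarrow> ((int n = b + d - int ((m+1) div 2) \<or> int n = b + d - int ((m+1) div 2) + 1) \<and> c1 = c2)"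
  by auto

lemma per_w:
  assumes "odd m" "quaternary m f"
    and hB: "B = {j \<in> {0..<m}. Re (f j) - Im (f j) = -1}"
    and hD: "D = {j \<in> {0..<m}. Re (f j) + Im (f j) = -1}"
    and "w < m"
  shows "cmod (autocorr m f w) = 1 \<longleftrightarrow>
     (int (Ncount m B D w) = int (card B) + int (card D) - int ((m + 1) div 2)
      \<or> int (Ncount m B D w) = int (card B) + int (card D) - int ((m + 1) div 2) + 1)
     \<and> card {(x, y). x \<in> B \<and> y \<in> D \<and> zdiff m x y = w}
       = card {(x, y). x \<in> B \<and> y \<in> D \<and> zdiff m x y = (m - w) mod m}"
proof -
  define U where "U k = (1 - 2 * of_bool (k \<in> B) :: int)" for k
  define V where "V k = (1 - 2 * of_bool (k \<in> D) :: int)" for k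
  define j where "j k = (k + w) mod m" for k
  have m0: "0 < m" using assms(5) by simp
  have jm: "j k < m" for k using m0 by (simp add: j_def)
  have Bsub: "B \<subseteq> {..<m}" and Dsub: "D \<subseteq> {..<m}" using hB hD by auto
  have RI: "k < m \<Longrightarrow> Re (f k) = real_of_int (U k + V k) / 2 \<and> Im (f k) = real_of_int (V k - U k) / 2" for k
    using reim[OF assms(2) hB hD] unfolding U_def V_def by blast
  have ReA: "Re (autocorr m f w) = real_of_int ((\<Sum>k<m. U k * U (j k)) + (\<Sum>k<m. V k * V (j k))) / 2"
  proof -
    have "Re (autocorr m f w) = (\<Sum>k<m. Re (f k) * Re (f (j k)) + Im (f k) * Im (f (j k)))"
      unfolding autocorr_def j_def Re_sum by simp
    also have "\<dots> = (\<Sum>k<m. real_of_int (U k * U (j k) + V k * V (j k)) / 2)"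
    proof (rule sum.cong[OF refl])
      fix k assume "k \<in> {..<m}"
      then show "Re (f k) * Re (f (j k)) + Im (f k) * Im (f (j k)) = real_of_int (U k * U (j k) + V k * V (j k)) / 2"
      proof -
        from \<open>k \<in> {..<m}\<close> have "k < m" by simp
        from RI[OF this] RI[OF jm[of k]] have e: "Re (f k) = real_of_int (U k + V k) / 2"
          "Im (f k) = real_of_int (V k - U k) / 2" "Re (f (j k)) = real_of_int (U (j k) + V (j k)) / 2"
          "Im (f (j k)) = real_of_int (V (j k) - U (j k)) / 2" by blast+
        show ?thesis unfolding e by (simp add: field_simps)
      qed
    qed
    finally show ?thesis by (simp add: sum_divide_distrib[symmetric] sum.distrib)
  qed
  have ImA: "Im (autocorr m f w) = real_of_int ((\<Sum>k<m. V k * U (j k)) - (\<Sum>k<m. U k * V (j k))) / 2"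
  proof -
    have "Im (autocorr m f w) = (\<Sum>k<m. Im (f k) * Re (f (j k)) - Re (f k) * Im (f (j k)))"
      unfolding autocorr_def j_def Im_sum by simp
    also have "\<dots> = (\<Sum>k<m. real_of_int (V k * U (j k) - U k * V (j k)) / 2)"
    proof (rule sum.cong[OF refl])
      fix k assume "k \<in> {..<m}"
      then show "Im (f k) * Re (f (j k)) - Re (f k) * Im (f (j k)) = real_of_int (V k * U (j k) - U k * V (j k)) / 2"
      proof -
        from \<open>k \<in> {..<m}\<close> have "k < m" by simp
        from RI[OF this] RI[OF jm[of k]] have e: "Re (f k) = real_of_int (U k + V k) / 2"
          "Im (f k) = real_of_int (V k - U k) / 2" "Re (f (j k)) = real_of_int (U (j k) + V (j k)) / 2"
          "Im (f (j k)) = real_of_int (V (j k) - U (j k)) / 2" by blast+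
        show ?thesis unfolding e by (simp add: field_simps)
      qed
    qed
    finally show ?thesis by (simp add: sum_divide_distrib[symmetric] sum_subtractf)
  qed
  note cs = corr_sum[OF m0 assms(5), folded j_def]
  have UU: "(\<Sum>k<m. U k * U (j k)) = int m - 2 * int (card B) - 2 * int (card B) + 4 * int (card ({..<m} \<inter> {k. k \<in> B \<and> j k \<in> B}))"
    using cs[OF Bsub Bsub] unfolding U_def .
  have VV: "(\<Sum>k<m. V k * V (j k)) = int m - 2 * int (card D) - 2 * int (card D) + 4 * int (card ({..<m} \<inter> {k. k \<in> D \<and> j k \<in> D}))"
    using cs[OF Dsub Dsub] unfolding V_def .
  have VU: "(\<Sum>k<m. V k * U (j k)) = int m - 2 * int (card D) - 2 * int (card B) + 4 * int (card ({..<m} \<inter> {k. k \<in> D \<and> j k \<in> B}))"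
    using cs[OF Dsub Bsub] unfolding U_def V_def .
  have UV: "(\<Sum>k<m. U k * V (j k)) = int m - 2 * int (card B) - 2 * int (card D) + 4 * int (card ({..<m} \<inter> {k. k \<in> B \<and> j k \<in> D}))"
    using cs[OF Bsub Dsub] unfolding U_def V_def .
  have N: "Ncount m B D w = card ({..<m} \<inter> {k. k \<in> B \<and> j k \<in> B}) + card ({..<m} \<inter> {k. k \<in> D \<and> j k \<in> D})"
    unfolding Ncount_def j_def using card_pairs1[OF Bsub Bsub assms(5)] card_pairs1[OF Dsub Dsub assms(5)] by simp
  have C1: "card {(x, y). x \<in> B \<and> y \<in> D \<and> zdiff m x y = w} = card ({..<m} \<inter> {k. k \<in> D \<and> j k \<in> B})"
    unfolding j_def using card_pairs1[OF Bsub Dsub assms(5)] .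
  have C2: "card {(x, y). x \<in> B \<and> y \<in> D \<and> zdiff m x y = (m - w) mod m} = card ({..<m} \<inter> {k. k \<in> B \<and> j k \<in> D})"
    unfolding j_def using card_pairs2[OF Bsub Dsub assms(5)] .
  define RE where "RE = int m - 2 * int (card B) - 2 * int (card D) + 2 * int (Ncount m B D w)"
  define c1 where "c1 = card {(x, y). x \<in> B \<and> y \<in> D \<and> zdiff m x y = w}"
  define c2 where "c2 = card {(x, y). x \<in> B \<and> y \<in> D \<and> zdiff m x y = (m - w) mod m}"
  define IM where "IM = 2 * (int c1 - int c2)"
  have ReE: "Re (autocorr m f w) = real_of_int RE"
    unfolding ReA UU VV RE_def N by simp
  have ImE: "Im (autocorr m f w) = real_of_int IM"
    unfolding ImA VU UV IM_def c1_def c2_def C1 C2 by simp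
  obtain t where t: "m = 2*t+1" using assms(1) oddE by blast
  have ht: "(m+1) div 2 = t+1" using t by simp
  have "cmod (autocorr m f w) = 1 \<longleftrightarrow> (Re (autocorr m f w))^2 + (Im (autocorr m f w))^2 = 1"
    unfolding cmod_def by simp
  also have "\<dots> \<longleftrightarrow> RE^2 + IM^2 = 1" unfolding ReE ImE
    proof -
      have "(real_of_int RE)\<^sup>2 + (real_of_int IM)\<^sup>2 = real_of_int (RE^2 + IM^2)" by simp
      then show "((real_of_int RE)\<^sup>2 + (real_of_int IM)\<^sup>2 = 1) = (RE\<^sup>2 + IM\<^sup>2 = 1)"
        by (simp only: of_int_eq_1_iff)
    qed
  also have "\<dots> \<longleftrightarrow> (RE = 1 \<or> RE = -1) \<and> IM = 0"
    by (rule sq) (simp add: RE_def assms(1))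
  finally have E: "cmod (autocorr m f w) = 1 \<longleftrightarrow> (RE = 1 \<or> RE = -1) \<and> IM = 0" .
  have G: "((RE = 1 \<or> RE = -1) \<and> IM = 0) \<longleftrightarrow>
     ((int (Ncount m B D w) = int (card B) + int (card D) - int ((m + 1) div 2)
      \<or> int (Ncount m B D w) = int (card B) + int (card D) - int ((m + 1) div 2) + 1) \<and> c1 = c2)"
    unfolding RE_def IM_def by (rule fin[OF t])
  from E G have "cmod (autocorr m f w) = 1 \<longleftrightarrow> ((int (Ncount m B D w) = int (card B) + int (card D) - int ((m + 1) div 2) \<or> int (Ncount m B D w) = int (card B) + int (card D) - int ((m + 1) div 2) + 1) \<and> c1 = c2)" by (rule trans)
  then show ?thesis by (simp only: c1_def c2_def)
qed
theorem theorem3: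
  fixes m :: nat and f :: "nat \<Rightarrow> complex" and B D :: "nat set"
  assumes "odd m"
    and "quaternary m f"
    and "B = {j \<in> {0..<m}. Re (f j) - Im (f j) = -1}"
    and "D = {j \<in> {0..<m}. Re (f j) + Im (f j) = -1}"
  shows "OQS m f \<longleftrightarrow>
    ASDS2 m (card B) (card D) (int (card B) + int (card D) - int ((m + 1) div 2)) B D
    \<and> diff_symmetric m B D" (is "_ \<longleftrightarrow> ?thesis_rhs")
proof -
  have m0: "0 < m" using assms(1) by (cases m) auto
  have e1: "{1..m-1} = {1..<m}" using m0 by auto
  have sub: "B \<subseteq> {0..<m}" "D \<subseteq> {0..<m}" using assms(3,4) by auto
  have ds: "diff_symmetric m B D \<longleftrightarrow> (\<forall>w\<in>{1..<m}. card {(x, y). x \<in> B \<and> y \<in> D \<and> zdiff m x y = w}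
       = card {(x, y). x \<in> B \<and> y \<in> D \<and> zdiff m x y = (m - w) mod m})"
    unfolding diff_symmetric_def
  proof (intro iffI ballI allI impI)
    fix w assume "\<forall>w\<in>{1..<m}. card {(x, y). x \<in> B \<and> y \<in> D \<and> zdiff m x y = w}
       = card {(x, y). x \<in> B \<and> y \<in> D \<and> zdiff m x y = (m - w) mod m}" "w < m"
    then show "card {(x, y). x \<in> B \<and> y \<in> D \<and> zdiff m x y = w}
       = card {(x, y). x \<in> B \<and> y \<in> D \<and> zdiff m x y = (m - w) mod m}"
    proof (cases "w = 0")
      case True then show ?thesis by simp
    next
      case False then have "w \<in> {1..<m}" using \<open>w < m\<close> by simp
      then show ?thesis using \<open>\<forall>w\<in>{1..<m}. _\<close> by blast
    qed
  next
    fix w assume a: "\<forall>w<m. card {(x, y). x \<in> B \<and> y \<in> D \<and> zdiff m x y = w}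
       = card {(x, y). x \<in> B \<and> y \<in> D \<and> zdiff m x y = (m - w) mod m}" and "w \<in> {1..<m}"
    then have "w < m" by simp
    with a show "card {(x, y). x \<in> B \<and> y \<in> D \<and> zdiff m x y = w}
       = card {(x, y). x \<in> B \<and> y \<in> D \<and> zdiff m x y = (m - w) mod m}" by blast
  qed
  have pw: "\<And>w. w \<in> {1..<m} \<Longrightarrow> cmod (autocorr m f w) = 1 \<longleftrightarrow>
     (int (Ncount m B D w) \<in> {int (card B) + int (card D) - int ((m + 1) div 2), int (card B) + int (card D) - int ((m + 1) div 2) + 1})
     \<and> card {(x, y). x \<in> B \<and> y \<in> D \<and> zdiff m x y = w}
       = card {(x, y). x \<in> B \<and> y \<in> D \<and> zdiff m x y = (m - w) mod m}"
    using per_w[OF assms] by simp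
  have "OQS m f \<longleftrightarrow> (\<forall>w\<in>{1..<m}. cmod (autocorr m f w) = 1)"
    unfolding OQS_def e1 using assms(1,2) by simp
  also have "\<dots> \<longleftrightarrow> (\<forall>w\<in>{1..<m}. (int (Ncount m B D w) \<in> {int (card B) + int (card D) - int ((m + 1) div 2), int (card B) + int (card D) - int ((m + 1) div 2) + 1})
     \<and> card {(x, y). x \<in> B \<and> y \<in> D \<and> zdiff m x y = w}
       = card {(x, y). x \<in> B \<and> y \<in> D \<and> zdiff m x y = (m - w) mod m})"
    by (rule ball_cong[OF refl pw])
  also have "\<dots> \<longleftrightarrow> (\<forall>w\<in>{1..<m}. (int (Ncount m B D w) \<in> {int (card B) + int (card D) - int ((m + 1) div 2), int (card B) + int (card D) - int ((m + 1) div 2) + 1}))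
     \<and> (\<forall>w\<in>{1..<m}. card {(x, y). x \<in> B \<and> y \<in> D \<and> zdiff m x y = w}
       = card {(x, y). x \<in> B \<and> y \<in> D \<and> zdiff m x y = (m - w) mod m})"
    by (rule ball_conj_distrib)
  also have "\<dots> \<longleftrightarrow> ?thesis_rhs"
    unfolding ASDS2_def ds using sub by simp
  finally show ?thesis .
qed

end
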